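(* If $G\in SVS$, then for every clique $C$ of $G$ the branch graph $B(G/C)$ is perfect.
   Context: All graphs are finite, simple and connected; a clique is a maximal complete set. A graph is split if its vertex set partitions into a stable set $S$ and a clique $K$. For $n\geq 4$, the $n$-sun $S_n$ is the split graph with stable set $\{s_1,\dots,s_n\}$, central clique $\{v_1,\dots,v_n\}$, $N(s_i)=\{v_i,v_{i+1}\}$ for $1\le i\le n-1$ and $N(s_n)=\{v_n,v_1\}$. A split graph $G$ with partition $(S,K)$ belongs to $SVS$ if: $G$ is VPT (a vertex-intersection graph of paths in a tree); every $v\in K$ satisfies $|N(v)\cap S|\le 2$; and whenever $S_k$ with $k=4$ or $k$ odd, $k\ge5$, is an induced subgraph of $G$, some $v\in K$ is adjacent to two non-consecutive vertices of the stable set of that $S_k$. For a clique $C$ of $G$, the branch graph $B(G/C)$ has vertex set the vertices of $V(G)\setminus C$ adjacent to some vertex of $C$, two such vertices $v,w$ being adjacent iff (1) $vw\notin E(G)$; (2) some vertex of $C$ is adjacent to both; (3) there exist $v',w'\in C$ with $v'$ adjacent to $v$ but not $w$, and $w'$ adjacent to $w$ but not $v$. A graph is perfect iff it contains no induced $C_{2n+1}$ or complement of $C_{2n+1}$ with $n\ge2$. *)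

theory Defs
  imports Main
begin

definition simple_graph :: "'a set \<Rightarrow> ('a \<Rightarrow> 'a \<Rightarrow> bool) \<Rightarrow> bool" where
  "simple_graph V E \<longleftrightarrow> finite V \<and>
     (\<forall>u v. E u v \<longrightarrow> u \<in> V \<and> v \<in> V) \<and>
     (\<forall>u v. E u v \<longrightarrow> E v u) \<and> (\<forall>u. \<not> E u u)"

definition is_path :: "('a \<Rightarrow> 'a \<Rightarrow> bool) \<Rightarrow> 'a list \<Rightarrow> bool" where
  "is_path E xs \<longleftrightarrow> xs \<noteq> [] \<and> distinct xs \<and>
     (\<forall>i. Suc i < length xs \<longrightarrow> E (xs ! i) (xs ! Suc i))"

definition connected_graph :: "'a set \<Rightarrow> ('a \<Rightarrow> 'a \<Rightarrow> bool) \<Rightarrow> bool" where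
  "connected_graph V E \<longleftrightarrow> V \<noteq> {} \<and>
     (\<forall>u\<in>V. \<forall>v\<in>V. \<exists>xs. is_path E xs \<and> hd xs = u \<and> last xs = v)"

definition graph :: "'a set \<Rightarrow> ('a \<Rightarrow> 'a \<Rightarrow> bool) \<Rightarrow> bool" where
  "graph V E \<longleftrightarrow> simple_graph V E \<and> connected_graph V E"

definition acyclic_graph :: "('a \<Rightarrow> 'a \<Rightarrow> bool) \<Rightarrow> bool" where
  "acyclic_graph E \<longleftrightarrow> \<not> (\<exists>xs. is_path E xs \<and> length xs \<ge> 3 \<and> E (last xs) (hd xs))"

definition tree :: "'b set \<Rightarrow> ('b \<Rightarrow> 'b \<Rightarrow> bool) \<Rightarrow> bool" where
  "tree T ET \<longleftrightarrow> graph T ET \<and> acyclic_graph ET"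

text \<open>VPT: vertex intersection graph of a family of paths in a tree (tree vertices
  labelled by natural numbers, which is no loss of generality for finite trees).\<close>
definition VPT :: "'a set \<Rightarrow> ('a \<Rightarrow> 'a \<Rightarrow> bool) \<Rightarrow> bool" where
  "VPT V E \<longleftrightarrow> (\<exists>(T::nat set) ET (P :: 'a \<Rightarrow> nat list). tree T ET \<and>
      (\<forall>v\<in>V. is_path ET (P v)) \<and>
      (\<forall>u\<in>V. \<forall>v\<in>V. u \<noteq> v \<longrightarrow> (E u v \<longleftrightarrow> set (P u) \<inter> set (P v) \<noteq> {})))"

definition complete_set :: "'a set \<Rightarrow> ('a \<Rightarrow> 'a \<Rightarrow> bool) \<Rightarrow> 'a set \<Rightarrow> bool" where
  "complete_set V E X \<longleftrightarrow> X \<subseteq> V \<and> (\<forall>x\<in>X. \<forall>y\<in>X. x \<noteq> y \<longrightarrow> E x y)"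

definition clique :: "'a set \<Rightarrow> ('a \<Rightarrow> 'a \<Rightarrow> bool) \<Rightarrow> 'a set \<Rightarrow> bool" where
  "clique V E C \<longleftrightarrow> complete_set V E C \<and>
     (\<forall>Y. complete_set V E Y \<and> C \<subseteq> Y \<longrightarrow> Y = C)"

definition stable_set :: "'a set \<Rightarrow> ('a \<Rightarrow> 'a \<Rightarrow> bool) \<Rightarrow> 'a set \<Rightarrow> bool" where
  "stable_set V E X \<longleftrightarrow> X \<subseteq> V \<and> (\<forall>x\<in>X. \<forall>y\<in>X. \<not> E x y)"

definition split_partition :: "'a set \<Rightarrow> ('a \<Rightarrow> 'a \<Rightarrow> bool) \<Rightarrow> 'a set \<Rightarrow> 'a set \<Rightarrow> bool" where
  "split_partition V E S K \<longleftrightarrow> S \<union> K = V \<and> S \<inter> K = {} \<and>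
     stable_set V E S \<and> clique V E K"

definition induced_sun :: "'a set \<Rightarrow> ('a \<Rightarrow> 'a \<Rightarrow> bool) \<Rightarrow> nat \<Rightarrow> (nat \<Rightarrow> 'a) \<Rightarrow> (nat \<Rightarrow> 'a) \<Rightarrow> bool" where
  "induced_sun V E k s v \<longleftrightarrow> k \<ge> 4 \<and>
     s ` {..<k} \<subseteq> V \<and> v ` {..<k} \<subseteq> V \<and>
     inj_on s {..<k} \<and> inj_on v {..<k} \<and> s ` {..<k} \<inter> v ` {..<k} = {} \<and>
     (\<forall>i<k. \<forall>j<k. \<not> E (s i) (s j)) \<and>
     (\<forall>i<k. \<forall>j<k. i \<noteq> j \<longrightarrow> E (v i) (v j)) \<and>
     (\<forall>i<k. \<forall>j<k. E (s i) (v j) \<longleftrightarrow> (j = i \<or> j = Suc i mod k))"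

definition SVS :: "'a set \<Rightarrow> ('a \<Rightarrow> 'a \<Rightarrow> bool) \<Rightarrow> 'a set \<Rightarrow> 'a set \<Rightarrow> bool" where
  "SVS V E S K \<longleftrightarrow> graph V E \<and> split_partition V E S K \<and> VPT V E \<and>
     (\<forall>w\<in>K. card {x\<in>S. E w x} \<le> 2) \<and>
     (\<forall>k s v. induced_sun V E k s v \<and> (k = 4 \<or> odd k) \<longrightarrow>
        (\<exists>w\<in>K. \<exists>i<k. \<exists>j<k. i \<noteq> j \<and> j \<noteq> Suc i mod k \<and> i \<noteq> Suc j mod k \<and>
            E w (s i) \<and> E w (s j)))"

definition branch_vertices :: "'a set \<Rightarrow> ('a \<Rightarrow> 'a \<Rightarrow> bool) \<Rightarrow> 'a set \<Rightarrow> 'a set" where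
  "branch_vertices V E C = {x \<in> V - C. \<exists>c\<in>C. E x c}"

definition branch_edge :: "'a set \<Rightarrow> ('a \<Rightarrow> 'a \<Rightarrow> bool) \<Rightarrow> 'a set \<Rightarrow> 'a \<Rightarrow> 'a \<Rightarrow> bool" where
  "branch_edge V E C x y \<longleftrightarrow> x \<in> branch_vertices V E C \<and> y \<in> branch_vertices V E C \<and>
     \<not> E x y \<and> (\<exists>c\<in>C. E c x \<and> E c y) \<and>
     (\<exists>x'\<in>C. E x' x \<and> \<not> E x' y) \<and> (\<exists>y'\<in>C. E y' y \<and> \<not> E y' x)"

text \<open>Perfect graphs, via the characterization given in the paper
  (no induced odd hole C_{2n+1} and no induced odd antihole, n \<ge> 2).\<close>
definition cyc_adj :: "nat \<Rightarrow> nat \<Rightarrow> nat \<Rightarrow> bool" where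
  "cyc_adj m i j \<longleftrightarrow> j = Suc i mod m \<or> i = Suc j mod m"

definition induced_odd_hole :: "'a set \<Rightarrow> ('a \<Rightarrow> 'a \<Rightarrow> bool) \<Rightarrow> 'a list \<Rightarrow> bool" where
  "induced_odd_hole V E xs \<longleftrightarrow> length xs \<ge> 5 \<and> odd (length xs) \<and> distinct xs \<and> set xs \<subseteq> V \<and>
     (\<forall>i<length xs. \<forall>j<length xs. i \<noteq> j \<longrightarrow>
        (E (xs ! i) (xs ! j) \<longleftrightarrow> cyc_adj (length xs) i j))"

definition induced_odd_antihole :: "'a set \<Rightarrow> ('a \<Rightarrow> 'a \<Rightarrow> bool) \<Rightarrow> 'a list \<Rightarrow> bool" where
  "induced_odd_antihole V E xs \<longleftrightarrow> length xs \<ge> 5 \<and> odd (length xs) \<and> distinct xs \<and> set xs \<subseteq> V \<and>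
     (\<forall>i<length xs. \<forall>j<length xs. i \<noteq> j \<longrightarrow>
        (E (xs ! i) (xs ! j) \<longleftrightarrow> \<not> cyc_adj (length xs) i j))"

definition perfect :: "'a set \<Rightarrow> ('a \<Rightarrow> 'a \<Rightarrow> bool) \<Rightarrow> bool" where
  "perfect V E \<longleftrightarrow> (\<nexists>xs. induced_odd_hole V E xs) \<and> (\<nexists>xs. induced_odd_antihole V E xs)"

end

theory Submission
  imports Defs
begin

lemma card3:
  assumes "finite A" "a \<in> A" "b \<in> A" "x \<in> A" "a \<noteq> b" "x \<noteq> a" "x \<noteq> b"
  shows "card A \<ge> 3"
proof -
  have "card {a,b,x} = 3" using assms by auto
  moreover have "card {a,b,x} \<le> card A" using assms by (intro card_mono) auto
  ultimately show ?thesis by simp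
qed

lemma cycle_contra:
  assumes svs: "SVS V E S K"
    and k4: "k \<ge> 4" and kodd: "k = 4 \<or> odd k"
    and inj: "inj_on y {..<k}" and yS: "y ` {..<k} \<subseteq> S"
    and adj: "\<forall>i<k. branch_edge V E K (y i) (y (Suc i mod k))"
    and nonadj: "\<forall>i<k. \<forall>j<k. i \<noteq> j \<and> j \<noteq> Suc i mod k \<and> i \<noteq> Suc j mod k \<longrightarrow> \<not> branch_edge V E K (y i) (y j)"
  shows False
proof -
  have g: "simple_graph V E" and sp: "split_partition V E S K"
    and deg: "\<forall>w\<in>K. card {x\<in>S. E w x} \<le> 2"
    and sun: "\<forall>k s v. induced_sun V E k s v \<and> (k = 4 \<or> odd k) \<longrightarrow>
        (\<exists>w\<in>K. \<exists>i<k. \<exists>j<k. i \<noteq> j \<and> j \<noteq> Suc i mod k \<and> i \<noteq> Suc j mod k \<and>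
            E w (s i) \<and> E w (s j))"
    using svs unfolding SVS_def graph_def by auto
  have fin: "finite V" and sym: "\<And>u v. E u v \<Longrightarrow> E v u"
    using g unfolding simple_graph_def by auto
  have SV: "S \<subseteq> V" and KV: "K \<subseteq> V" and SK: "S \<inter> K = {}"
    and Sst: "\<forall>x\<in>S. \<forall>y\<in>S. \<not> E x y" and Kc: "\<forall>x\<in>K. \<forall>y\<in>K. x \<noteq> y \<longrightarrow> E x y"
    using sp unfolding split_partition_def stable_set_def clique_def complete_set_def by auto
  have finS: "finite S" using fin SV finite_subset by blast
  define nx where "nx i = (if Suc i = k then 0 else Suc i)" for i
  define pr where "pr j = (if j = 0 then k - 1 else j - 1)" for j
  have nx_eq: "Suc i mod k = nx i" if "i < k" for i
    using that k4 unfolding nx_def by auto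
  have nxk: "nx i < k" "nx i \<noteq> i" if "i < k" for i using that k4 unfolding nx_def by auto
  have prk: "pr j < k" "nx (pr j) = j" if "j < k" for j using that k4 unfolding nx_def pr_def by auto
  have yS': "y i \<in> S" if "i < k" for i using yS that by auto
  have yinj: "y i = y j \<longleftrightarrow> i = j" if "i < k" "j < k" for i j
    using inj that unfolding inj_on_def by auto
  have "\<forall>i. \<exists>c. i < k \<longrightarrow> c \<in> K \<and> E c (y i) \<and> E c (y (nx i))"
    using adj nx_eq unfolding branch_edge_def by auto
  then obtain c where c: "\<And>i. i < k \<Longrightarrow> c i \<in> K \<and> E (c i) (y i) \<and> E (c i) (y (nx i))" by metis
  have A: "x = y i \<or> x = y (nx i)" if "i < k" "x \<in> S" "E (c i) x" for i x
  proof (rule ccontr)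
    assume "\<not> ?thesis"
    then have "card {x\<in>S. E (c i) x} \<ge> 3"
      using that c[of i] yS'[of i] yS'[of "nx i"] nxk[of i] yinj[of i "nx i"]
      by (intro card3[of _ "y i" "y (nx i)" x]) (auto simp: finS)
    then show False using deg c[of i] that by fastforce
  qed
  define v where "v j = c (pr j)" for j
  have Eyv: "E (y i) (v j) \<longleftrightarrow> j = i \<or> j = nx i" if "i < k" "j < k" for i j
  proof
    assume "E (y i) (v j)"
    then have "E (c (pr j)) (y i)" using sym v_def by auto
    then have "y i = y (pr j) \<or> y i = y (nx (pr j))" using A prk that yS' by blast
    then have "i = pr j \<or> i = j" using yinj prk that by auto
    then show "j = i \<or> j = nx i" using prk that by auto
  next
    assume "j = i \<or> j = nx i"
    moreover have "pr (nx i) = i" using that k4 unfolding nx_def pr_def by auto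
    ultimately show "E (y i) (v j)" using c prk that sym unfolding v_def by metis
  qed
  have vK: "v j \<in> K" if "j < k" for j using c prk that unfolding v_def by auto
  have vinj: "inj_on v {..<k}"
  proof (rule inj_onI)
    fix a b assume ab: "a \<in> {..<k}" "b \<in> {..<k}" "v a = v b"
    have "E (y a) (v a)" "E (y b) (v b)" using Eyv[of a a] Eyv[of b b] ab by auto
    then have "E (y a) (v b)" "E (y b) (v a)" using ab by auto
    then have "b = a \<or> b = nx a" "a = b \<or> a = nx b"
      using Eyv[of a b] Eyv[of b a] ab by auto
    then show "a = b" using ab k4 unfolding nx_def by (auto split: if_splits)
  qed
  have "induced_sun V E k y v"
    unfolding induced_sun_def
  proof (intro conjI)
    show "y ` {..<k} \<subseteq> V" using yS SV by auto
    show "v ` {..<k} \<subseteq> V" using vK KV by auto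
    show "y ` {..<k} \<inter> v ` {..<k} = {}" using yS' vK SK by fastforce
    show "\<forall>i<k. \<forall>j<k. \<not> E (y i) (y j)" using Sst yS' by auto
    show "\<forall>i<k. \<forall>j<k. i \<noteq> j \<longrightarrow> E (v i) (v j)"
      using Kc vK vinj unfolding inj_on_def by (metis lessThan_iff)
    show "\<forall>i<k. \<forall>j<k. E (y i) (v j) = (j = i \<or> j = Suc i mod k)"
      using Eyv nx_eq by auto
  qed (use k4 inj vinj in auto)
  then obtain w i j where w: "w \<in> K" "i < k" "j < k" "i \<noteq> j" "j \<noteq> Suc i mod k" "i \<noteq> Suc j mod k"
     "E w (y i)" "E w (y j)"
    using sun kodd by blast
  have nb: "\<not> branch_edge V E K (y i) (y j)" using nonadj w by blast
  have bv: "y i \<in> branch_vertices V E K" "y j \<in> branch_vertices V E K"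
    using w yS' SV SK sym unfolding branch_vertices_def by blast+
  have "\<not> E (y i) (y j)" using Sst yS' w by auto
  with nb bv w have "(\<forall>x'\<in>K. E x' (y i) \<longrightarrow> E x' (y j)) \<or> (\<forall>y'\<in>K. E y' (y j) \<longrightarrow> E y' (y i))"
    unfolding branch_edge_def by blast
  then show False
  proof
    assume h: "\<forall>x'\<in>K. E x' (y i) \<longrightarrow> E x' (y j)"
    then have "E (c i) (y j)" using c w by auto
    then have "y j = y i \<or> y j = y (nx i)" using A w yS' by blast
    then show False using yinj nxk w nx_eq by auto
  next
    assume h: "\<forall>y'\<in>K. E y' (y j) \<longrightarrow> E y' (y i)"
    then have "E (c j) (y i)" using c w by auto
    then have "y i = y j \<or> y i = y (nx j)" using A w yS' by blast
    then show False using yinj nxk w nx_eq by auto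
  qed
qed


lemma no_edges_perfect:
  assumes "\<And>x y. \<not> B x y"
  shows "perfect W B"
  unfolding perfect_def induced_odd_hole_def induced_odd_antihole_def
proof (intro conjI notI)
  assume "\<exists>xs. 5 \<le> length xs \<and> odd (length xs) \<and> distinct xs \<and> set xs \<subseteq> W \<and>
      (\<forall>i<length xs. \<forall>j<length xs. i \<noteq> j \<longrightarrow> B (xs ! i) (xs ! j) = cyc_adj (length xs) i j)"
  then obtain xs where h: "5 \<le> length xs"
    "\<forall>i<length xs. \<forall>j<length xs. i \<noteq> j \<longrightarrow> B (xs ! i) (xs ! j) = cyc_adj (length xs) i j" by blast
  have "cyc_adj (length xs) 0 1" using h(1) unfolding cyc_adj_def by auto
  moreover have "B (xs!0) (xs!1) = cyc_adj (length xs) 0 1" using h(2)[rule_format, of 0 1] h(1) by force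
  ultimately show False using assms[of "xs!0" "xs!1"] by auto
next
  assume "\<exists>xs. 5 \<le> length xs \<and> odd (length xs) \<and> distinct xs \<and> set xs \<subseteq> W \<and>
      (\<forall>i<length xs. \<forall>j<length xs. i \<noteq> j \<longrightarrow> B (xs ! i) (xs ! j) = (\<not> cyc_adj (length xs) i j))"
  then obtain xs where h: "5 \<le> length xs"
    "\<forall>i<length xs. \<forall>j<length xs. i \<noteq> j \<longrightarrow> B (xs ! i) (xs ! j) = (\<not> cyc_adj (length xs) i j)" by blast
  have "\<not> cyc_adj (length xs) 0 2" using h(1) unfolding cyc_adj_def by auto
  moreover have "B (xs!0) (xs!2) = (\<not> cyc_adj (length xs) 0 2)" using h(2)[rule_format, of 0 2] h(1) by force
  ultimately show False using assms[of "xs!0" "xs!2"] by auto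
qed

theorem mainTheorem13:
  fixes V :: "'a set" and E :: "'a \<Rightarrow> 'a \<Rightarrow> bool" and S K C :: "'a set"
  assumes "SVS V E S K"
    and "clique V E C"
  shows "perfect (branch_vertices V E C) (branch_edge V E C)"
proof -
  have g: "simple_graph V E" and sp: "split_partition V E S K"
    and deg: "\<forall>w\<in>K. card {x\<in>S. E w x} \<le> 2"
    using assms(1) unfolding SVS_def graph_def by auto
  have fin: "finite V" and sym: "\<And>u v. E u v \<Longrightarrow> E v u" and irr: "\<And>u. \<not> E u u"
    using g unfolding simple_graph_def by auto
  have SKV: "S \<union> K = V" and SK: "S \<inter> K = {}"
    and Sst: "\<forall>x\<in>S. \<forall>y\<in>S. \<not> E x y" and Kc: "complete_set V E K"
    using sp unfolding split_partition_def stable_set_def clique_def by auto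
  have Kc': "\<forall>x\<in>K. \<forall>y\<in>K. x \<noteq> y \<longrightarrow> E x y" using Kc unfolding complete_set_def by auto
  have finS: "finite S" using fin SKV by auto
  have Cc: "C \<subseteq> V" "\<forall>x\<in>C. \<forall>y\<in>C. x \<noteq> y \<longrightarrow> E x y"
    and Cmax: "\<forall>Y. complete_set V E Y \<and> C \<subseteq> Y \<longrightarrow> Y = C"
    using assms(2) unfolding clique_def complete_set_def by auto
  show ?thesis
  proof (cases "C \<inter> S = {}")
    case False
    then obtain s where s: "s \<in> C" "s \<in> S" by blast
    have noedge: "\<not> branch_edge V E C x y" for x y
    proof
      assume be: "branch_edge V E C x y"
      then obtain c x' y' where c: "c \<in> C" "E c x" "E c y" and xy: "x \<in> V - C" "y \<in> V - C"
        and nxy: "\<not> E x y" and x': "x' \<in> C" "E x' x" "\<not> E x' y"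
        and y': "y' \<in> C" "E y' y" "\<not> E y' x"
        unfolding branch_edge_def branch_vertices_def by blast
      have xny: "x \<noteq> y" using x' by auto
      consider "x \<in> S" "y \<in> S" | "x \<in> S" "y \<in> K" | "x \<in> K" "y \<in> S" | "x \<in> K" "y \<in> K"
        using xy SKV by blast
      then show False
      proof cases
        case 1
        have "c \<notin> S" using c 1 Sst by blast
        then have cK: "c \<in> K" using c Cc SKV by blast
        have "c \<noteq> s" using `c \<notin> S` s by auto
        then have "E c s" using Cc c s by auto
        then have "card {z\<in>S. E c z} \<ge> 3"
          using 1 c s xy xny by (intro card3[of _ s x y]) (auto simp: finS)
        then show False using deg cK by fastforce
      next
        case 2
        have "x' \<notin> S" using x' 2 Sst by blast
        then have "x' \<in> K" using x' Cc SKV by blast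
        then show False using Kc' x' 2 xy by auto
      next
        case 3
        have "y' \<notin> S" using y' 3 Sst by blast
        then have "y' \<in> K" using y' Cc SKV by blast
        then show False using Kc' y' 3 xy by auto
      next
        case 4
        then show False using Kc' nxy xny by blast
      qed
    qed
    show ?thesis by (rule no_edges_perfect) (use noedge in blast)
  next
    case True
    then have "C \<subseteq> K" using Cc SKV by blast
    then have KC: "K = C" using Cmax Kc by blast
    have BS: "branch_vertices V E K \<subseteq> S" using SKV unfolding branch_vertices_def by auto
    show ?thesis
      unfolding perfect_def KC[symmetric]
    proof (intro conjI notI)
      assume "\<exists>xs. induced_odd_hole (branch_vertices V E K) (branch_edge V E K) xs"
      then obtain xs where h: "induced_odd_hole (branch_vertices V E K) (branch_edge V E K) xs" by blast
      define m where "m = length xs"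
      have m: "m \<ge> 5" "odd m" and d: "distinct xs" and sx: "set xs \<subseteq> S"
        and iff: "\<forall>i<m. \<forall>j<m. i \<noteq> j \<longrightarrow> branch_edge V E K (xs ! i) (xs ! j) = cyc_adj m i j"
        using h BS unfolding induced_odd_hole_def m_def by auto
      show False
      proof (rule cycle_contra[OF assms(1), of m "\<lambda>i. xs ! i"])
        show "4 \<le> m" "m = 4 \<or> odd m" using m by auto
        show "inj_on ((!) xs) {..<m}" using d by (simp add: inj_on_nth m_def)
        show "(!) xs ` {..<m} \<subseteq> S" using sx m_def by auto
        show "\<forall>i<m. branch_edge V E K (xs ! i) (xs ! (Suc i mod m))"
        proof (intro allI impI)
          fix i assume "i < m"
          moreover have "i \<noteq> Suc i mod m" using m `i < m`
            by (cases "Suc i = m") auto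
          moreover have "Suc i mod m < m" using m by simp
          ultimately show "branch_edge V E K (xs ! i) (xs ! (Suc i mod m))"
            using iff[rule_format, of i "Suc i mod m"] unfolding cyc_adj_def by simp
        qed
        show "\<forall>i<m. \<forall>j<m. i \<noteq> j \<and> j \<noteq> Suc i mod m \<and> i \<noteq> Suc j mod m \<longrightarrow>
            \<not> branch_edge V E K (xs ! i) (xs ! j)"
        proof (intro allI impI)
          fix i j assume "i < m" "j < m" "i \<noteq> j \<and> j \<noteq> Suc i mod m \<and> i \<noteq> Suc j mod m"
          then show "\<not> branch_edge V E K (xs ! i) (xs ! j)"
            using iff[rule_format, of i j] unfolding cyc_adj_def by blast
        qed
      qed
    next
      assume "\<exists>xs. induced_odd_antihole (branch_vertices V E K) (branch_edge V E K) xs"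
      then obtain xs where h: "induced_odd_antihole (branch_vertices V E K) (branch_edge V E K) xs" by blast
      define m where "m = length xs"
      have m: "m \<ge> 5" "odd m" and d: "distinct xs" and sx: "set xs \<subseteq> S"
        and iff: "\<forall>i<m. \<forall>j<m. i \<noteq> j \<longrightarrow> branch_edge V E K (xs ! i) (xs ! j) = (\<not> cyc_adj m i j)"
        using h BS unfolding induced_odd_antihole_def m_def by auto
      have xsS: "xs ! i \<in> S" if "i < m" for i using sx that m_def by auto
      have dxs: "xs ! i = xs ! j \<longleftrightarrow> i = j" if "i < m" "j < m" for i j
        using d that m_def nth_eq_iff_index_eq by auto
      show False
      proof (cases "m = 5")
        case True
        define p :: "nat list" where "p = [0,2,4,1,3]"
        have i5: "i < 5 \<Longrightarrow> i = 0 \<or> i = 1 \<or> i = 2 \<or> i = 3 \<or> i = 4" for i :: nat by arith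
        have pm: "p ! i < m" if "i < 5" for i using i5[OF that] True p_def by auto
        have pinj: "p ! i = p ! j \<longleftrightarrow> i = j" if "i < 5" "j < 5" for i j
          using i5[OF that(1)] i5[OF that(2)] p_def by auto
        have BB: "branch_edge V E K (xs ! (p ! i)) (xs ! (p ! j)) \<longleftrightarrow> \<not> cyc_adj 5 (p ! i) (p ! j)"
          if "i < 5" "j < 5" "i \<noteq> j" for i j
          using iff[rule_format, of "p!i" "p!j"] pm[OF that(1)] pm[OF that(2)] pinj[OF that(1,2)] that(3) True by simp
        show False
        proof (rule cycle_contra[OF assms(1), of 5 "\<lambda>i. xs ! (p ! i)"])
          show "4 \<le> (5::nat)" "5 = 4 \<or> odd (5::nat)" by auto
          show "inj_on (\<lambda>i. xs ! (p ! i)) {..<5}"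
            unfolding inj_on_def using dxs pm pinj by (metis lessThan_iff)
          show "(\<lambda>i. xs ! (p ! i)) ` {..<5} \<subseteq> S" using xsS pm by auto
          show "\<forall>i<5. branch_edge V E K (xs ! (p ! i)) (xs ! (p ! (Suc i mod 5)))"
          proof (intro allI impI)
            fix i :: nat assume i: "i < 5"
            have "Suc i mod 5 < 5" "i \<noteq> Suc i mod 5" using i5[OF i] by auto
            moreover have "\<not> cyc_adj 5 (p ! i) (p ! (Suc i mod 5))"
              using i5[OF i] unfolding p_def cyc_adj_def by auto
            ultimately show "branch_edge V E K (xs ! (p ! i)) (xs ! (p ! (Suc i mod 5)))"
              using BB i by auto
          qed
          show "\<forall>i<5. \<forall>j<5. i \<noteq> j \<and> j \<noteq> Suc i mod 5 \<and> i \<noteq> Suc j mod 5 \<longrightarrow>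
              \<not> branch_edge V E K (xs ! (p ! i)) (xs ! (p ! j))"
          proof (intro allI impI)
            fix i j :: nat assume i: "i < 5" and j: "j < 5"
              and n: "i \<noteq> j \<and> j \<noteq> Suc i mod 5 \<and> i \<noteq> Suc j mod 5"
            have "cyc_adj 5 (p ! i) (p ! j)"
              using i5[OF i] i5[OF j] n unfolding p_def cyc_adj_def by auto
            then show "\<not> branch_edge V E K (xs ! (p ! i)) (xs ! (p ! j))"
              using BB i j n by auto
          qed
        qed
      next
        case False
        then have m7: "m \<ge> 7" using m by presburger
        define p :: "nat list" where "p = [0,3,1,4]"
        have i4: "i < 4 \<Longrightarrow> i = 0 \<or> i = 1 \<or> i = 2 \<or> i = 3" for i :: nat by arith
        have pm: "p ! i < m" if "i < 4" for i using i4[OF that] m7 p_def by auto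
        have pinj: "p ! i = p ! j \<longleftrightarrow> i = j" if "i < 4" "j < 4" for i j
          using i4[OF that(1)] i4[OF that(2)] p_def by auto
        have BB: "branch_edge V E K (xs ! (p ! i)) (xs ! (p ! j)) \<longleftrightarrow> \<not> cyc_adj m (p ! i) (p ! j)"
          if "i < 4" "j < 4" "i \<noteq> j" for i j
          using iff[rule_format, of "p!i" "p!j"] pm[OF that(1)] pm[OF that(2)] pinj[OF that(1,2)] that(3) by simp
        have mods: "Suc 0 mod m = 1" "Suc 1 mod m = 2" "Suc 3 mod m = 4" "Suc 4 mod m = 5"
          "Suc 2 mod m = 3"
          using m7 by auto
        show False
        proof (rule cycle_contra[OF assms(1), of 4 "\<lambda>i. xs ! (p ! i)"])
          show "4 \<le> (4::nat)" "4 = 4 \<or> odd (4::nat)" by auto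
          show "inj_on (\<lambda>i. xs ! (p ! i)) {..<4}"
            unfolding inj_on_def using dxs pm pinj by (metis lessThan_iff)
          show "(\<lambda>i. xs ! (p ! i)) ` {..<4} \<subseteq> S" using xsS pm by auto
          show "\<forall>i<4. branch_edge V E K (xs ! (p ! i)) (xs ! (p ! (Suc i mod 4)))"
          proof (intro allI impI)
            fix i :: nat assume i: "i < 4"
            have "Suc i mod 4 < 4" "i \<noteq> Suc i mod 4" using i4[OF i] by auto
            moreover have "\<not> cyc_adj m (p ! i) (p ! (Suc i mod 4))"
              using i4[OF i] m7 mods unfolding p_def cyc_adj_def by auto
            ultimately show "branch_edge V E K (xs ! (p ! i)) (xs ! (p ! (Suc i mod 4)))"
              using BB i by auto
          qed
          show "\<forall>i<4. \<forall>j<4. i \<noteq> j \<and> j \<noteq> Suc i mod 4 \<and> i \<noteq> Suc j mod 4 \<longrightarrow>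
              \<not> branch_edge V E K (xs ! (p ! i)) (xs ! (p ! j))"
          proof (intro allI impI)
            fix i j :: nat assume i: "i < 4" and j: "j < 4"
              and n: "i \<noteq> j \<and> j \<noteq> Suc i mod 4 \<and> i \<noteq> Suc j mod 4"
            have "cyc_adj m (p ! i) (p ! j)"
              using i4[OF i] i4[OF j] n mods unfolding p_def cyc_adj_def by auto
            then show "\<not> branch_edge V E K (xs ! (p ! i)) (xs ! (p ! j))"
              using BB i j n by auto
          qed
        qed
      qed
    qed
  qed
qed

end
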